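(* Let $X,Y_1,Y_2$ be Hilbert spaces and $\mathcal A_i:Y_i\to X$, $i=1,2$, bounded linear operators. Suppose $\xi\in\operatorname{ran}\mathcal A_1$ but $\xi\notin\operatorname{ran}\mathcal A_2$. For $\alpha>0$ let $$\eta_\alpha:=(\mathcal A_2\mathcal A_2^*+\alpha I)^{-1}[\xi],\qquad\xi_\alpha:=\frac{\eta_\alpha}{\langle\xi,\eta_\alpha\rangle^{3/4}}.$$ Then $\langle\xi,\eta_\alpha\rangle>0$, $\lim_{\alpha\to0+}\|\mathcal A_1^*[\xi_\alpha]\|=\infty$ and $\lim_{\alpha\to0+}\mathcal A_2^*[\xi_\alpha]=0$. *)

theory Defs
  imports "HOL-Analysis.Analysis"
begin

text \<open>eta_reg A xi alpha = (A A^* + alpha I)^{-1} xi, i.e. the unique solution eta of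
  A (A^* eta) + alpha eta = xi.\<close>
definition eta_reg :: "('y::real_inner \<Rightarrow> 'x::real_inner) \<Rightarrow> 'x \<Rightarrow> real \<Rightarrow> 'x" where
  "eta_reg A \<xi> \<alpha> = (THE \<eta>. A (adjoint A \<eta>) + \<alpha> *\<^sub>R \<eta> = \<xi>)"

definition xi_reg :: "('y::real_inner \<Rightarrow> 'x::real_inner) \<Rightarrow> 'x \<Rightarrow> real \<Rightarrow> 'x" where
  "xi_reg A \<xi> \<alpha> = eta_reg A \<xi> \<alpha> /\<^sub>R ((\<xi> \<bullet> eta_reg A \<xi> \<alpha>) powr (3/4))"

end

theory Submission
  imports Defs
begin

lemma lin_zero_aux:
  fixes c q :: real
  assumes "\<forall>t. 0 \<le> 2*t*c + t^2*q" "q \<ge> 0"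
  shows "c = 0"
proof -
  define t where "t = -c/(q+1)"
  have tq: "t*(q+1) = -c" unfolding t_def using assms(2) by simp
  have "0 \<le> 2*t*c + t^2*q" using assms(1) by blast
  then have "0 \<le> (2*t*c + t^2*q) * (q+1)^2"
    using assms(2) by simp
  also have "\<dots> = 2*c*(q+1)*(t*(q+1)) + q*(t*(q+1))^2"
    by (simp add: algebra_simps power2_eq_square)
  also have "\<dots> = -(c^2) * (q+2)" unfolding tq
    by (simp add: algebra_simps power2_eq_square)
  finally have "c^2 * (q+2) \<le> 0" by simp
  moreover have "c^2 * (q+2) \<ge> 0" using assms(2) by simp
  ultimately have "c^2 * (q+2) = 0" by linarith
  then show ?thesis using assms(2) by simp
qed

lemma quad_min:
  fixes L :: "'a::{real_inner,complete_space} \<Rightarrow> 'b::real_inner" and \<phi> :: "'a \<Rightarrow> real"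
  assumes L: "bounded_linear L" and P: "bounded_linear \<phi>" and al: "\<alpha> > 0"
  shows "\<exists>\<eta>. \<forall>h. L \<eta> \<bullet> L h + \<alpha> * (\<eta> \<bullet> h) = \<phi> h"
proof -
  interpret L: bounded_linear L by fact
  interpret P: bounded_linear \<phi> by fact
  define J where "J x = L x \<bullet> L x + \<alpha> * (x \<bullet> x) - 2 * \<phi> x" for x
  obtain K where K: "K > 0" "\<And>x. norm (\<phi> x) \<le> norm x * K" using P.pos_bounded by blast
  have Jlow: "J x \<ge> -(K^2)/\<alpha>" for x
  proof -
    have "\<phi> x \<le> norm x * K" using K(2)[of x] by simp
    moreover have "L x \<bullet> L x \<ge> 0" by simp
    moreover have "x \<bullet> x = (norm x)^2" by (simp add: power2_norm_eq_inner)
    moreover have "\<alpha> * (norm x - K/\<alpha>)^2 \<ge> 0" using al by simp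
    moreover have "\<alpha> * (norm x - K/\<alpha>)^2 = \<alpha> * (norm x)^2 - 2 * K * norm x + K^2/\<alpha>"
      using al by (simp add: field_simps power2_eq_square)
    moreover have "\<alpha> * (x \<bullet> x) = \<alpha> * (norm x)^2" by (simp add: power2_norm_eq_inner)
    moreover have "2 * \<phi> x \<le> 2 * K * norm x" using K(2)[of x] by (simp add: mult.commute)
    ultimately show ?thesis unfolding J_def by linarith
  qed
  define d where "d = Inf (range J)"
  have bdd: "bdd_below (range J)" using Jlow by (intro bdd_belowI[of _ "-(K^2)/\<alpha>"]) auto
  have dle: "d \<le> J x" for x unfolding d_def using bdd by (simp add: cInf_lower)
  have "\<forall>n. \<exists>x. J x < d + 1/(real n + 1)"
  proof
    fix n
    have "Inf (range J) < d + 1/(real n + 1)" unfolding d_def by (simp add: add_pos_pos)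
    then obtain y where "y \<in> range J" "y < d + 1/(real n + 1)"
      using cInf_lessD[of "range J"] by blast
    then show "\<exists>x. J x < d + 1/(real n + 1)" by auto
  qed
  then obtain X where X: "\<And>n. J (X n) < d + 1/(real n + 1)" by metis
  have para: "\<alpha> * (norm (x - y))^2 \<le> 2 * J x + 2 * J y - 4 * J ((1/2) *\<^sub>R (x + y))" for x y
  proof -
    have "L (x - y) \<bullet> L (x - y) \<ge> 0" by simp
    moreover have "2 * J x + 2 * J y - 4 * J ((1/2) *\<^sub>R (x + y)) =
        L (x - y) \<bullet> L (x - y) + \<alpha> * ((x - y) \<bullet> (x - y))"
      unfolding J_def by (simp add: L.diff L.add L.scaleR P.add P.scaleR inner_diff inner_add
          algebra_simps inner_commute)
    moreover have "\<alpha> * ((x - y) \<bullet> (x - y)) = \<alpha> * (norm (x - y))^2" by (simp add: power2_norm_eq_inner)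
    ultimately show ?thesis by linarith
  qed
  have cau: "Cauchy X"
  proof (rule metric_CauchyI)
    fix e :: real assume e: "e > 0"
    obtain N :: nat where N: "4 / (\<alpha> * e^2) < real N + 1"
      using reals_Archimedean2 by (metis add.commute add_strict_increasing zero_less_one less_eq_real_def)
    have N': "4 / (real N + 1) < \<alpha> * e^2"
      using N e al by (simp add: field_simps)
    show "\<exists>M. \<forall>m\<ge>M. \<forall>n\<ge>M. dist (X m) (X n) < e"
    proof (intro exI allI impI)
      fix m n assume mn: "N \<le> m" "N \<le> n"
      have m1: "1/(real m + 1) \<le> 1/(real N + 1)" using mn by (simp add: frac_le)
      have n1: "1/(real n + 1) \<le> 1/(real N + 1)" using mn by (simp add: frac_le)
      have "J ((1/2) *\<^sub>R (X m + X n)) \<ge> d" by (rule dle)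
      then have "\<alpha> * (norm (X m - X n))^2 < \<alpha> * e^2"
        using para[of "X m" "X n"] X[of m] X[of n] m1 n1 N' by linarith
      then have "(norm (X m - X n))^2 < e^2" using al by simp
      then have "norm (X m - X n) < e" using e by (simp add: power_less_imp_less_base)
      then show "dist (X m) (X n) < e" by (simp add: dist_norm)
    qed
  qed
  then obtain \<eta> where lim: "X \<longlonglongrightarrow> \<eta>" using Cauchy_convergent_iff convergent_def by blast
  have Jcont: "(\<lambda>n. J (X n)) \<longlonglongrightarrow> J \<eta>"
    unfolding J_def by (intro tendsto_intros L.tendsto P.tendsto lim)
  have Jd: "(\<lambda>n. J (X n)) \<longlonglongrightarrow> d"
  proof (rule tendsto_sandwich[of "\<lambda>n. d" _ _ "\<lambda>n. d + 1/(real n + 1)"])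
    show "\<forall>\<^sub>F n in sequentially. d \<le> J (X n)" using dle by simp
    show "\<forall>\<^sub>F n in sequentially. J (X n) \<le> d + 1/(real n + 1)" using X by (intro always_eventually allI less_imp_le)
    show "(\<lambda>n. d) \<longlonglongrightarrow> d" by simp
    have "(\<lambda>n. 1/(real n + 1)) \<longlonglongrightarrow> 0" using LIMSEQ_inverse_real_of_nat
      by (simp add: inverse_eq_divide add.commute)
    then show "(\<lambda>n. d + 1/(real n + 1)) \<longlonglongrightarrow> d" using tendsto_add[of "\<lambda>n. d" d sequentially] by force
  qed
  have Jeta: "J \<eta> = d" using LIMSEQ_unique[OF Jcont Jd] .
  show ?thesis
  proof (intro exI allI)
    fix h
    define c where "c = L \<eta> \<bullet> L h + \<alpha> * (\<eta> \<bullet> h) - \<phi> h"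
    define q where "q = L h \<bullet> L h + \<alpha> * (h \<bullet> h)"
    have q0: "q \<ge> 0" unfolding q_def using al by simp
    have "\<forall>t. 0 \<le> 2*t*c + t^2*q"
    proof
      fix t
      have "J (\<eta> + t *\<^sub>R h) = J \<eta> + 2*t*c + t^2*q"
        unfolding J_def c_def q_def
        by (simp add: L.add L.scaleR P.add P.scaleR inner_add algebra_simps inner_commute power2_eq_square)
      moreover have "J (\<eta> + t *\<^sub>R h) \<ge> J \<eta>" using dle Jeta by simp
      ultimately show "0 \<le> 2*t*c + t^2*q" by linarith
    qed
    then have "c = 0" using lin_zero_aux q0 by blast
    then show "L \<eta> \<bullet> L h + \<alpha> * (\<eta> \<bullet> h) = \<phi> h" unfolding c_def by simp
  qed
qed


lemma riesz_H:
  fixes \<phi> :: "'a::{real_inner,complete_space} \<Rightarrow> real"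
  assumes "bounded_linear \<phi>"
  shows "\<exists>w. \<forall>h. \<phi> h = w \<bullet> h"
proof -
  have "bounded_linear (\<lambda>x::'a. 0::real)" by (rule bounded_linear_zero)
  from quad_min[OF this assms, of 1] obtain \<eta> where "\<forall>h. 0 * 0 + 1 * (\<eta> \<bullet> h) = \<phi> h"
    by auto
  then show ?thesis by (intro exI[of _ \<eta>]) simp
qed

lemma adjoint_works_H:
  fixes A :: "'a::{real_inner,complete_space} \<Rightarrow> 'b::real_inner"
  assumes "bounded_linear A"
  shows "A x \<bullet> y = x \<bullet> adjoint A y"
proof -
  have "\<forall>y. \<exists>w. \<forall>x. A x \<bullet> y = w \<bullet> x"
  proof
    fix y
    have "bounded_linear (\<lambda>x. A x \<bullet> y)"
      using bounded_linear_compose[OF bounded_linear_inner_left assms] by simp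
    then show "\<exists>w. \<forall>x. A x \<bullet> y = w \<bullet> x" by (rule riesz_H)
  qed
  then obtain g where g: "\<forall>y x. A x \<bullet> y = g y \<bullet> x" by metis
  then have "\<exists>f'. \<forall>x y. A x \<bullet> y = x \<bullet> f' y" by (metis inner_commute)
  then have "\<forall>x y. A x \<bullet> y = x \<bullet> adjoint A y" unfolding adjoint_def by (rule someI_ex)
  then show ?thesis by blast
qed

lemma adjoint_bl_H:
  fixes A :: "'a::{real_inner,complete_space} \<Rightarrow> 'b::real_inner"
  assumes A: "bounded_linear A"
  shows "bounded_linear (adjoint A)"
proof -
  interpret A: bounded_linear A by fact
  obtain K where K: "K > 0" "\<And>x. norm (A x) \<le> norm x * K" using A.pos_bounded by blast
  note aw = adjoint_works_H[OF A]
  show ?thesis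
  proof (rule bounded_linear_intro[of _ K])
    fix a b
    have "\<forall>x. x \<bullet> adjoint A (a + b) = x \<bullet> (adjoint A a + adjoint A b)"
      by (simp add: aw[symmetric] inner_add)
    then show "adjoint A (a + b) = adjoint A a + adjoint A b" using vector_eq_ldot by blast
  next
    fix r a
    have "\<forall>x. x \<bullet> adjoint A (r *\<^sub>R a) = x \<bullet> (r *\<^sub>R adjoint A a)"
      by (simp add: aw[symmetric])
    then show "adjoint A (r *\<^sub>R a) = r *\<^sub>R adjoint A a" using vector_eq_ldot by blast
  next
    fix y
    have "(norm (adjoint A y))^2 = A (adjoint A y) \<bullet> y"
      by (simp add: aw power2_norm_eq_inner)
    also have "\<dots> \<le> norm (A (adjoint A y)) * norm y" by (rule norm_cauchy_schwarz)
    also have "\<dots> \<le> norm (adjoint A y) * K * norm y"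
      using K(2) by (simp add: mult_right_mono)
    finally have *: "norm (adjoint A y) * norm (adjoint A y) \<le> norm (adjoint A y) * (norm y * K)"
      by (simp add: power2_eq_square algebra_simps)
    show "norm (adjoint A y) \<le> norm y * K"
    proof (cases "norm (adjoint A y) = 0")
      case True then show ?thesis using K by simp
    next
      case False then show ?thesis using * by (simp add: mult_le_cancel_left)
    qed
  qed
qed

lemma eta_reg_H:
  fixes A :: "'a::{real_inner,complete_space} \<Rightarrow> 'b::{real_inner,complete_space}"
  assumes A: "bounded_linear A" and al: "\<alpha> > 0"
  shows "A (adjoint A (eta_reg A \<xi> \<alpha>)) + \<alpha> *\<^sub>R eta_reg A \<xi> \<alpha> = \<xi>"
proof -
  interpret A: bounded_linear A by fact
  have B: "bounded_linear (adjoint A)" by (rule adjoint_bl_H[OF A])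
  interpret B: bounded_linear "adjoint A" by fact
  note aw = adjoint_works_H[OF A]
  have "\<exists>\<eta>. A (adjoint A \<eta>) + \<alpha> *\<^sub>R \<eta> = \<xi>"
  proof -
    have "bounded_linear (\<lambda>h. \<xi> \<bullet> h)" by (rule bounded_linear_inner_right)
    from quad_min[OF B this al] obtain \<eta> where
      e: "\<forall>h. adjoint A \<eta> \<bullet> adjoint A h + \<alpha> * (\<eta> \<bullet> h) = \<xi> \<bullet> h" by blast
    have "\<forall>h. h \<bullet> (A (adjoint A \<eta>) + \<alpha> *\<^sub>R \<eta>) = h \<bullet> \<xi>"
    proof
      fix h
      have "h \<bullet> (A (adjoint A \<eta>) + \<alpha> *\<^sub>R \<eta>) = adjoint A \<eta> \<bullet> adjoint A h + \<alpha> * (\<eta> \<bullet> h)"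
        by (simp add: inner_add inner_commute aw[symmetric])
      then show "h \<bullet> (A (adjoint A \<eta>) + \<alpha> *\<^sub>R \<eta>) = h \<bullet> \<xi>" using e by (simp add: inner_commute)
    qed
    then show ?thesis using vector_eq_ldot by blast
  qed
  then obtain \<eta>0 where \<eta>0: "A (adjoint A \<eta>0) + \<alpha> *\<^sub>R \<eta>0 = \<xi>" by blast
  have "\<exists>!\<eta>. A (adjoint A \<eta>) + \<alpha> *\<^sub>R \<eta> = \<xi>"
  proof (rule ex1I[of _ \<eta>0])
    show "A (adjoint A \<eta>0) + \<alpha> *\<^sub>R \<eta>0 = \<xi>" by (rule \<eta>0)

  next
    fix \<eta>' 
    have h2: "A (adjoint A (\<eta>0 - \<eta>')) + \<alpha> *\<^sub>R (\<eta>0 - \<eta>') = \<xi> - (A (adjoint A \<eta>') + \<alpha> *\<^sub>R \<eta>')"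
      using \<eta>0 by (simp add: A.diff B.diff algebra_simps)
    show "\<eta>' = \<eta>0" if h3: "A (adjoint A \<eta>') + \<alpha> *\<^sub>R \<eta>' = \<xi>"
    proof -
      define d where "d = \<eta>0 - \<eta>'"
      have "A (adjoint A d) + \<alpha> *\<^sub>R d = 0" using h2 h3 unfolding d_def by simp
      then have "(A (adjoint A d) + \<alpha> *\<^sub>R d) \<bullet> d = 0" by simp
      moreover have "A (adjoint A d) \<bullet> d = adjoint A d \<bullet> adjoint A d" by (simp add: aw)
      ultimately have "adjoint A d \<bullet> adjoint A d + \<alpha> * (d \<bullet> d) = 0"
        by (simp add: inner_add_left)
      moreover have "adjoint A d \<bullet> adjoint A d \<ge> 0" by simp
      moreover have "\<alpha> * (d \<bullet> d) \<ge> 0" using al by simp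
      ultimately have "\<alpha> * (d \<bullet> d) = 0" by linarith
      then have "d = 0" using al by simp
      then show ?thesis unfolding d_def by simp
    qed
  qed
  then show ?thesis unfolding eta_reg_def by (rule theI')
qed


lemma my_powr_at_top:
  assumes "(p::real) > 0"
  shows "filterlim (\<lambda>x. x powr p) at_top at_top"
proof (subst filterlim_cong[OF refl refl])
  show "LIM x at_top. exp (p * ln x) :> at_top"
    by (rule filterlim_compose[OF exp_at_top filterlim_tendsto_pos_mult_at_top[OF tendsto_const]])
       (simp_all add: ln_at_top assms)
  show "eventually (\<lambda>x. x powr p = exp (p * ln x)) at_top"
    using eventually_gt_at_top[of 0] by eventually_elim (simp add: powr_def)
qed

theorem lemmaA2:
  fixes A1 :: "'y1::{real_inner, complete_space} \<Rightarrow> 'x::{real_inner, complete_space}"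
    and A2 :: "'y2::{real_inner, complete_space} \<Rightarrow> 'x"
    and \<xi> :: 'x
  assumes "bounded_linear A1" and "bounded_linear A2"
    and "\<xi> \<in> range A1" and "\<xi> \<notin> range A2"
  shows "(\<forall>\<alpha>>0. \<xi> \<bullet> eta_reg A2 \<xi> \<alpha> > 0)
    \<and> filterlim (\<lambda>\<alpha>. norm (adjoint A1 (xi_reg A2 \<xi> \<alpha>))) at_top (at_right 0)
    \<and> ((\<lambda>\<alpha>. adjoint A2 (xi_reg A2 \<xi> \<alpha>)) \<longlongrightarrow> 0) (at_right 0)"
proof -
  interpret A1: bounded_linear A1 by fact
  interpret A2: bounded_linear A2 by fact
  have B1: "bounded_linear (adjoint A1)" using adjoint_bl_H assms(1) by blast
  have B2: "bounded_linear (adjoint A2)" using adjoint_bl_H assms(2) by blast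
  interpret B1: bounded_linear "adjoint A1" by fact
  interpret B2: bounded_linear "adjoint A2" by fact
  note aw1 = adjoint_works_H[OF assms(1)] and aw2 = adjoint_works_H[OF assms(2)]
  define \<eta> where "\<eta> a = eta_reg A2 \<xi> a" for a
  define w where "w a = adjoint A2 (\<eta> a)" for a
  define f where "f a = \<xi> \<bullet> \<eta> a" for a
  have E: "A2 (w a) + a *\<^sub>R \<eta> a = \<xi>" if "a > 0" for a
    unfolding w_def \<eta>_def using eta_reg_H[OF assms(2) that] by blast
  have F1: "\<xi> \<bullet> x = w a \<bullet> adjoint A2 x + a * (\<eta> a \<bullet> x)" if a: "a > 0" for a x
  proof -
    have "\<xi> \<bullet> x = (A2 (w a) + a *\<^sub>R \<eta> a) \<bullet> x" using E[OF a] by simp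
    also have "\<dots> = w a \<bullet> adjoint A2 x + a * (\<eta> a \<bullet> x)" by (simp add: inner_add_left aw2)
    finally show ?thesis .
  qed
  have xi0: "\<xi> \<noteq> 0" using assms(4) A2.zero by (metis rangeI)
  have fW: "f a = w a \<bullet> w a + a * (\<eta> a \<bullet> \<eta> a)" if "a > 0" for a
    using F1[OF that, of "\<eta> a"] by (simp add: f_def w_def)
  have fpos: "f a > 0" if a: "a > 0" for a
  proof (rule ccontr)
    assume "\<not> f a > 0"
    then have "w a \<bullet> w a + a * (\<eta> a \<bullet> \<eta> a) \<le> 0" using fW[OF a] by simp
    moreover have "w a \<bullet> w a \<ge> 0" by simp
    moreover have "a * (\<eta> a \<bullet> \<eta> a) \<ge> 0" using a by simp
    ultimately have "a * (\<eta> a \<bullet> \<eta> a) = 0" by linarith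
    then have e0: "\<eta> a = 0" using a by simp
    then have "w a = 0" unfolding w_def using B2.zero by simp
    then have "\<xi> = 0" using E[OF a] e0 A2.zero by simp
    with xi0 show False by simp
  qed
  have key: "(norm (w a - w b))^2 \<le> f a - f b" if ab: "0 < a" "a < b" for a b
  proof -
    have b: "0 < b" using ab by simp
    have 1: "f a = w a \<bullet> w a + a*(\<eta> a \<bullet> \<eta> a)" using fW ab(1) .
    have 2: "f b = w b \<bullet> w b + b*(\<eta> b \<bullet> \<eta> b)" using fW b .
    have 3: "f b = w a \<bullet> w b + a * (\<eta> a \<bullet> \<eta> b)"
      using F1[OF ab(1), of "\<eta> b"] by (simp add: f_def w_def)
    have 4: "f a = w a \<bullet> w b + b * (\<eta> a \<bullet> \<eta> b)"
      using F1[OF b, of "\<eta> a"] by (simp add: f_def w_def inner_commute)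
    have n: "(norm (w a - w b))^2 = w a \<bullet> w a + w b \<bullet> w b - 2 * (w a \<bullet> w b)"
      by (simp add: power2_norm_eq_inner inner_diff_left inner_diff_right inner_commute)
    have m0: "0 \<le> (\<eta> a - \<eta> b) \<bullet> (\<eta> a - \<eta> b)" by simp
    then have m: "2 * (\<eta> a \<bullet> \<eta> b) \<le> \<eta> a \<bullet> \<eta> a + \<eta> b \<bullet> \<eta> b"
      by (simp add: inner_diff_left inner_diff_right inner_commute)
    have p1: "a * (2 * (\<eta> a \<bullet> \<eta> b)) \<le> a * (\<eta> a \<bullet> \<eta> a + \<eta> b \<bullet> \<eta> b)"
      using m ab by (simp add: mult_left_mono)
    have p2: "a * (\<eta> b \<bullet> \<eta> b) \<le> b * (\<eta> b \<bullet> \<eta> b)"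
      using ab by (simp add: mult_right_mono)
    show ?thesis using 1 2 3 4 n p1 p2 by (simp add: algebra_simps)
  qed
  have mono: "f b \<le> f a" if "0 < a" "a \<le> b" for a b
  proof (cases "a = b")
    case True then show ?thesis by simp
  next
    case False
    then have "(norm (w a - w b))^2 \<le> f a - f b" using key that by simp
    moreover have "(norm (w a - w b))^2 \<ge> 0" by simp
    ultimately show ?thesis by linarith
  qed
  have ftop: "filterlim f at_top (at_right 0)"
    unfolding filterlim_at_top
  proof (rule allI, rule ccontr)
    fix Z assume nev: "\<not> eventually (\<lambda>x. Z \<le> f x) (at_right 0)"
    have bnd: "f a < Z" if a: "a > 0" for a
    proof -
      from nev a obtain y where y: "y > 0" "y < a" "\<not> Z \<le> f y"
        unfolding eventually_at_right_field by blast
      then show "f a < Z" using mono[of y a] by simp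
    qed
    define s where "s n = inverse (real (Suc n))" for n
    have s0: "s n > 0" for n unfolding s_def by simp
    have sdec: "s n \<le> s m" if "m \<le> n" for m n unfolding s_def using that
      by (simp add: le_imp_inverse_le)
    have slt: "s n < s m" if "m < n" for m n unfolding s_def using that
      by (simp add: less_imp_inverse_less)
    have slim: "s \<longlonglongrightarrow> 0" unfolding s_def by (rule LIMSEQ_inverse_real_of_nat)
    define g where "g n = f (s n)" for n
    have ginc: "\<forall>m n. m \<le> n \<longrightarrow> g m \<le> g n" unfolding g_def using mono s0 sdec by blast
    have gB: "Bseq g"
    proof (rule BseqI'[of _ Z])
      fix n show "norm (g n) \<le> Z" unfolding g_def using fpos[OF s0, of n] bnd[OF s0, of n] by simp
    qed
    have gC: "Cauchy g" using Bseq_mono_convergent[OF gB ginc] convergent_Cauchy by blast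
    have wC: "Cauchy (\<lambda>n. w (s n))"
    proof (rule metric_CauchyI)
      fix e :: real assume e: "e > 0"
      from CauchyD[OF gC, of "e^2"] e obtain M where M: "\<forall>m\<ge>M. \<forall>n\<ge>M. norm (g m - g n) < e^2"
        by auto
      have "norm (w (s m) - w (s n)) < e" if mn: "m \<ge> M" "n \<ge> M" "m < n" for m n
      proof -
        have "(norm (w (s n) - w (s m)))^2 \<le> g n - g m" unfolding g_def
          using key[OF s0 slt[OF mn(3)]] .
        also have "\<dots> < e^2"
        proof -
          have "\<bar>g n - g m\<bar> < e^2" using M mn by auto
          then show ?thesis by linarith
        qed
        finally have "norm (w (s n) - w (s m)) < e" using e by (simp add: power_less_imp_less_base)
        then show ?thesis by (simp add: norm_minus_commute)
      qed
      then have "\<forall>m\<ge>M. \<forall>n\<ge>M. norm (w (s m) - w (s n)) < e"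
        using e by (metis linorder_neqE_nat norm_minus_commute diff_self norm_zero)
      then show "\<exists>M. \<forall>m\<ge>M. \<forall>n\<ge>M. dist (w (s m)) (w (s n)) < e" by (auto simp: dist_norm)
    qed
    then obtain z where wz: "(\<lambda>n. w (s n)) \<longlonglongrightarrow> z" using Cauchy_convergent_iff convergent_def by blast
    have r0: "(\<lambda>n. s n *\<^sub>R \<eta> (s n)) \<longlonglongrightarrow> 0"
    proof (rule Lim_null_comparison)
      show "\<forall>\<^sub>F n in sequentially. norm (s n *\<^sub>R \<eta> (s n)) \<le> sqrt (s n * Z)"
      proof (intro always_eventually allI real_le_rsqrt)
        fix n
        have "(norm (s n *\<^sub>R \<eta> (s n)))^2 = s n * (s n * (\<eta> (s n) \<bullet> \<eta> (s n)))"
          by (simp only: power2_norm_eq_inner inner_scaleR_left inner_scaleR_right mult.assoc)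
        also have "\<dots> \<le> s n * f (s n)"
          using fW[OF s0, of n] s0[of n] by (simp add: mult_left_mono)
        also have "\<dots> \<le> s n * Z" using bnd[OF s0, of n] s0[of n] by simp
        finally show "(norm (s n *\<^sub>R \<eta> (s n)))^2 \<le> s n * Z" .
      qed
      show "(\<lambda>n. sqrt (s n * Z)) \<longlonglongrightarrow> 0"
        using tendsto_real_sqrt[OF tendsto_mult[OF slim tendsto_const[of Z]]] by simp
    qed
    have l1: "(\<lambda>n. A2 (w (s n))) \<longlonglongrightarrow> A2 z" using A2.tendsto wz .
    have "(\<lambda>n. \<xi> - s n *\<^sub>R \<eta> (s n)) \<longlonglongrightarrow> \<xi> - 0" by (intro tendsto_intros r0)
    moreover have "\<xi> - s n *\<^sub>R \<eta> (s n) = A2 (w (s n))" for n using E[OF s0, of n] by (simp add: algebra_simps)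
    ultimately have l2: "(\<lambda>n. A2 (w (s n))) \<longlonglongrightarrow> \<xi>" by simp
    have "\<xi> = A2 z" using LIMSEQ_unique[OF l2 l1] .
    then show False using assms(4) by auto
  qed
  have xr: "xi_reg A2 \<xi> a = \<eta> a /\<^sub>R (f a powr (3/4))" for a
    unfolding xi_reg_def \<eta>_def f_def by simp
  have ev: "\<forall>\<^sub>F a in at_right (0::real). a > 0" by (rule eventually_at_right_less)
  have f4: "filterlim (\<lambda>a. f a powr (1/4)) at_top (at_right 0)"
    by (rule filterlim_compose[OF my_powr_at_top ftop]) simp
  have P1: "\<forall>\<alpha>>0. \<xi> \<bullet> eta_reg A2 \<xi> \<alpha> > 0" using fpos unfolding f_def \<eta>_def by blast
  obtain y where y: "\<xi> = A1 y" using assms(3) by blast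
  have ny: "norm y > 0" using y xi0 A1.zero by auto
  have P2: "filterlim (\<lambda>\<alpha>. norm (adjoint A1 (xi_reg A2 \<xi> \<alpha>))) at_top (at_right 0)"
  proof (rule filterlim_at_top_mono)
    show "LIM a at_right 0. f a powr (1/4) * inverse (norm y) :> at_top"
      by (rule filterlim_at_top_mult_tendsto_pos[OF tendsto_const _ f4]) (use ny in simp)
    show "\<forall>\<^sub>F a in at_right 0. f a powr (1/4) * inverse (norm y) \<le> norm (adjoint A1 (xi_reg A2 \<xi> a))"
      using ev
    proof eventually_elim
      case (elim a)
      have fa: "f a > 0" using fpos elim by blast
      have "f a = y \<bullet> adjoint A1 (\<eta> a)" unfolding f_def y by (simp add: aw1)
      also have "\<dots> \<le> norm y * norm (adjoint A1 (\<eta> a))" by (rule norm_cauchy_schwarz)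
      finally have c: "f a / norm y \<le> norm (adjoint A1 (\<eta> a))" using ny by (simp add: field_simps)
      have "f a powr (1/4) * inverse (norm y) = (f a / norm y) / f a powr (3/4)"
      proof -
        have "f a powr (1/4) = f a powr 1 / f a powr (3/4)" using powr_diff[of "f a" 1 "3/4"] by simp
        moreover have "f a powr (3/4) > 0" using fa by simp
        ultimately show ?thesis using fa ny by (simp add: powr_one field_simps)
      qed
      also have "\<dots> \<le> norm (adjoint A1 (\<eta> a)) / f a powr (3/4)"
        using divide_right_mono[OF c, of "f a powr (3/4)"] fa by simp
      also have "\<dots> = norm (adjoint A1 (xi_reg A2 \<xi> a))"
        unfolding xr using fa by (simp add: B1.scaleR) (simp add: field_simps)
      finally show ?case .
    qed
  qed
  have P3: "((\<lambda>\<alpha>. adjoint A2 (xi_reg A2 \<xi> \<alpha>)) \<longlongrightarrow> 0) (at_right 0)"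
  proof (rule Lim_null_comparison)
    show "((\<lambda>a. inverse (f a powr (1/4))) \<longlongrightarrow> 0) (at_right 0)"
      by (rule tendsto_inverse_0_at_top[OF f4])
    show "\<forall>\<^sub>F a in at_right 0. norm (adjoint A2 (xi_reg A2 \<xi> a)) \<le> inverse (f a powr (1/4))"
      using ev
    proof eventually_elim
      case (elim a)
      have fa: "f a > 0" using fpos elim by blast
      have "(norm (w a))^2 \<le> f a" using fW[OF elim] elim
        by (simp add: power2_norm_eq_inner)
      then have "norm (w a) \<le> sqrt (f a)" by (rule real_le_rsqrt)
      also have "\<dots> = f a powr (1/2)" using fa by (simp add: powr_half_sqrt)
      finally have c: "norm (w a) \<le> f a powr (1/2)" .
      have "norm (adjoint A2 (xi_reg A2 \<xi> a)) = norm (w a) / f a powr (3/4)"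
        unfolding xr w_def using fa by (simp add: B2.scaleR) (simp add: field_simps)
      also have "\<dots> \<le> f a powr (1/2) / f a powr (3/4)"
        using divide_right_mono[OF c, of "f a powr (3/4)"] fa by simp
      also have "\<dots> = f a powr (1/2 - 3/4)" by (rule powr_diff[symmetric])
      also have "\<dots> = inverse (f a powr (1/4))" using powr_minus[of "f a" "1/4"] by simp
      finally show ?case .
    qed
  qed
  show ?thesis using P1 P2 P3 by blast
qed

end
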